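(* Let $d\ge1$ and $p$ an odd integer. Let $(g_n)$ be independent real random variables satisfying $P(|g_n|<\rho)>0$ for all $\rho>0$ and all $n$. Let $u_0=\sum_nc_nh_n\in\overline H^{(d-1)/2}(\mathbb R^d)$, $u_0^\omega=\sum_nc_ng_n(\omega)h_n$ and, for $N\in\mathbb N^*$, $[u_0^\omega]_N=\sum_{\lambda_n<N}c_ng_n(\omega)h_n$. Then for every $t>0$ and every $N\in\mathbb N^*$, $$P\Big(\omega:\ \|[u_0^\omega]_N\|_{\overline H^{(d-1)/2}(\mathbb R^d)}\le t\ \text{ and }\ \|e^{-i\tau H}[u_0^\omega]_N\|_{L^{2p}_\tau([-2\pi,2\pi],\overline W^{\frac17,\infty}(\mathbb R^d))}\le t\Big)>0.$$
   Context: $H=-\Delta+|x|^2$ on $\mathbb R^d$; $(h_n)$ is an orthonormal basis of $L^2(\mathbb R^d)$ of eigenfunctions, $Hh_n=\lambda_n^2h_n$. $\overline H^s$ (resp. $\overline W^{s,q}$) is the closure of the Schwartz space for $\|H^{s/2}u\|_{L^2}$ (resp. $\|H^{s/2}u\|_{L^q}$). The $g_n$ are defined on a probability space $(\Omega,\mathcal A,P)$. *)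

theory Defs
  imports "HOL-Probability.Probability"
begin

(* Functions on R^d are modelled as  real^'n => complex  with d = CARD('n). *)

definition partial2 :: "(real^'n \<Rightarrow> complex) \<Rightarrow> real^'n \<Rightarrow> 'n \<Rightarrow> complex" where
  "partial2 f x i = vector_derivative
      (\<lambda>s. vector_derivative (\<lambda>t. f (x + t *\<^sub>R axis i 1)) (at s)) (at 0)"

definition twice_partially_differentiable :: "(real^'n \<Rightarrow> complex) \<Rightarrow> bool" where
  "twice_partially_differentiable f \<longleftrightarrow>
     (\<forall>x i. (\<forall>s. (\<lambda>t. f (x + t *\<^sub>R axis i 1)) differentiable (at s)) \<and>
            (\<lambda>s. vector_derivative (\<lambda>t. f (x + t *\<^sub>R axis i 1)) (at s)) differentiable (at 0))"

definition laplacian :: "(real^'n \<Rightarrow> complex) \<Rightarrow> real^'n \<Rightarrow> complex" where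
  "laplacian f x = (\<Sum>i\<in>UNIV. partial2 f x i)"

definition harmonic_osc :: "(real^'n \<Rightarrow> complex) \<Rightarrow> real^'n \<Rightarrow> complex" where
  "harmonic_osc f x = - laplacian f x + complex_of_real ((norm x)\<^sup>2) * f x"

definition L2_inner :: "(real^'n \<Rightarrow> complex) \<Rightarrow> (real^'n \<Rightarrow> complex) \<Rightarrow> complex" where
  "L2_inner f g = (LINT x|lborel. f x * cnj (g x))"

definition L2_fun :: "(real^'n \<Rightarrow> complex) \<Rightarrow> bool" where
  "L2_fun f \<longleftrightarrow> f \<in> borel_measurable lborel \<and> integrable lborel (\<lambda>x. (cmod (f x))\<^sup>2)"

definition L2_norm :: "(real^'n \<Rightarrow> complex) \<Rightarrow> real" where
  "L2_norm f = sqrt (LINT x|lborel. (cmod (f x))\<^sup>2)"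

definition Linf_norm :: "(real^'n \<Rightarrow> complex) \<Rightarrow> real" where
  "Linf_norm f = real_of_ereal (esssup lborel (\<lambda>x. ereal (cmod (f x))))"

definition hermite_basis :: "(nat \<Rightarrow> real^'n \<Rightarrow> complex) \<Rightarrow> (nat \<Rightarrow> real) \<Rightarrow> bool" where
  "hermite_basis h lam \<longleftrightarrow>
     (\<forall>n. L2_fun (h n)) \<and>
     (\<forall>n m. L2_inner (h n) (h m) = (if n = m then 1 else 0)) \<and>
     (\<forall>f. L2_fun f \<longrightarrow> (\<forall>n. L2_inner f (h n) = 0) \<longrightarrow> (AE x in lborel. f x = 0)) \<and>
     (\<forall>n. twice_partially_differentiable (h n)) \<and>
     (\<forall>n x. harmonic_osc (h n) x = complex_of_real ((lam n)\<^sup>2) * h n x) \<and>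
     (\<forall>n. lam n > 0)"

definition fin_comb :: "(nat \<Rightarrow> real^'n \<Rightarrow> complex) \<Rightarrow> nat set \<Rightarrow> (nat \<Rightarrow> complex) \<Rightarrow> real^'n \<Rightarrow> complex" where
  "fin_comb h F a x = (\<Sum>n\<in>F. a n * h n x)"

(* H^{s/2} (sum_{n in F} a_n h_n) = sum_{n in F} (lam_n^2)^{s/2} a_n h_n  (functional calculus) *)
definition Hpow_comb :: "(nat \<Rightarrow> real^'n \<Rightarrow> complex) \<Rightarrow> (nat \<Rightarrow> real) \<Rightarrow> real \<Rightarrow> nat set \<Rightarrow> (nat \<Rightarrow> complex) \<Rightarrow> real^'n \<Rightarrow> complex" where
  "Hpow_comb h lam s F a = fin_comb h F (\<lambda>n. complex_of_real (((lam n)\<^sup>2) powr (s / 2)) * a n)"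

(* coefficients of e^{-i tau H} (sum a_n h_n) *)
definition schr_coeff :: "(nat \<Rightarrow> real) \<Rightarrow> real \<Rightarrow> (nat \<Rightarrow> complex) \<Rightarrow> nat \<Rightarrow> complex" where
  "schr_coeff lam \<tau> a n = exp (- \<i> * complex_of_real (\<tau> * (lam n)\<^sup>2)) * a n"

definition Hbar_norm :: "(nat \<Rightarrow> real^'n \<Rightarrow> complex) \<Rightarrow> (nat \<Rightarrow> real) \<Rightarrow> real \<Rightarrow> nat set \<Rightarrow> (nat \<Rightarrow> complex) \<Rightarrow> real" where
  "Hbar_norm h lam s F a = L2_norm (Hpow_comb h lam s F a)"

definition Wbar_inf_norm :: "(nat \<Rightarrow> real^'n \<Rightarrow> complex) \<Rightarrow> (nat \<Rightarrow> real) \<Rightarrow> real \<Rightarrow> nat set \<Rightarrow> (nat \<Rightarrow> complex) \<Rightarrow> real" where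
  "Wbar_inf_norm h lam s F a = Linf_norm (Hpow_comb h lam s F a)"

(* u = sum c_n h_n lies in \bar H^s: ||H^{s/2} u||_{L^2}^2 = sum (lam_n^2)^s |c_n|^2 < infinity *)
definition in_Hbar :: "(nat \<Rightarrow> real) \<Rightarrow> real \<Rightarrow> (nat \<Rightarrow> complex) \<Rightarrow> bool" where
  "in_Hbar lam s c \<longleftrightarrow> summable (\<lambda>n. ((lam n)\<^sup>2) powr s * (cmod (c n))\<^sup>2)"

end

theory Submission
  imports Defs
begin

definition bddae :: "'a measure \<Rightarrow> ('a \<Rightarrow> complex) \<Rightarrow> bool" where
  "bddae M f \<longleftrightarrow> (\<exists>B. AE x in M. cmod (f x) \<le> B)"

definition Phi :: "'a measure \<Rightarrow> ('a \<Rightarrow> complex) \<Rightarrow> real" where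
  "Phi M f = real_of_ereal (esssup M (\<lambda>x. ereal (cmod (f x))))"

lemma Phi_le:
  assumes f: "f \<in> borel_measurable M" and B: "0 \<le> B"
    and H: "bddae M f \<Longrightarrow> AE x in M. cmod (f x) \<le> B"
  shows "Phi M f \<le> B"
proof (cases "esssup M (\<lambda>x. ereal (cmod (f x)))")
  case (real r)
  have "AE x in M. ereal (cmod (f x)) \<le> ereal r" using esssup_AE[of "\<lambda>x. ereal (cmod (f x))" M] real by simp
  then have "bddae M f" unfolding bddae_def by (auto elim!: eventually_mono)
  then have "AE x in M. ereal (cmod (f x)) \<le> ereal B" using H by (auto elim!: eventually_mono)
  then have "esssup M (\<lambda>x. ereal (cmod (f x))) \<le> ereal B"
    by (intro esssup_I) (use f in measurable)
  then show ?thesis using real by (simp add: Phi_def)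
qed (use B in \<open>simp_all add: Phi_def\<close>)

lemma Phi_AE:
  assumes f: "f \<in> borel_measurable M" and b: "bddae M f"
  shows "AE x in M. cmod (f x) \<le> Phi M f"
proof -
  obtain B where B: "AE x in M. cmod (f x) \<le> B" using b unfolding bddae_def by auto
  have le: "esssup M (\<lambda>x. ereal (cmod (f x))) \<le> ereal B"
    by (intro esssup_I) (use f B in \<open>measurable, auto elim!: eventually_mono\<close>)
  have ae: "AE x in M. ereal (cmod (f x)) \<le> esssup M (\<lambda>x. ereal (cmod (f x)))"
    by (rule esssup_AE)
  show ?thesis
  proof (cases "esssup M (\<lambda>x. ereal (cmod (f x)))")
    case (real r)
    then show ?thesis using ae by (auto simp: Phi_def elim!: eventually_mono)
  next
    case PInf then show ?thesis using le by simp
  next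
    case MInf then show ?thesis using ae by (auto elim!: eventually_mono)
  qed
qed

lemma Phi_nonneg:
  assumes "emeasure M (space M) \<noteq> 0"
  shows "0 \<le> Phi M f"
proof (cases "esssup M (\<lambda>x. ereal (cmod (f x)))")
  case (real r)
  show ?thesis
  proof (rule ccontr)
    assume "\<not> 0 \<le> Phi M f"
    then have "r < 0" using real by (simp add: Phi_def)
    have "AE x in M. ereal (cmod (f x)) \<le> ereal r"
      using esssup_AE[of "\<lambda>x. ereal (cmod (f x))" M] real by simp
    then have "AE x in M. False" using \<open>r < 0\<close>
      by (auto elim!: eventually_mono) (meson norm_ge_zero order.trans not_le)
    then show False using assms by (simp add: eventually_False ae_filter_eq_bot_iff)
  qed
qed (simp_all add: Phi_def)

lemma Phi_unbdd:
  assumes f: "f \<in> borel_measurable M" and "\<not> bddae M f"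
  shows "Phi M f \<le> 0"
  using Phi_le[OF f, of 0] assms by auto

lemma bddae_add: "bddae M f \<Longrightarrow> bddae M g \<Longrightarrow> bddae M (\<lambda>x. f x + g x)"
  unfolding bddae_def
proof (elim exE)
  fix A B assume A: "AE x in M. cmod (f x) \<le> A" and B: "AE x in M. cmod (g x) \<le> B"
  have "AE x in M. cmod (f x + g x) \<le> A + B"
    using A B by eventually_elim (meson add_mono norm_triangle_ineq order_trans)
  then show "\<exists>B. AE x in M. cmod (f x + g x) \<le> B" by blast
qed

lemma bddae_scale: "bddae M f \<Longrightarrow> bddae M (\<lambda>x. c * f x)"
  unfolding bddae_def
proof (elim exE)
  fix A assume A: "AE x in M. cmod (f x) \<le> A"
  have "AE x in M. cmod (c * f x) \<le> cmod c * A"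
    using A by eventually_elim (simp add: norm_mult mult_left_mono)
  then show "\<exists>B. AE x in M. cmod (c * f x) \<le> B" by blast
qed

lemma bddae_cong: "(\<And>x. f x = g x) \<Longrightarrow> bddae M f = bddae M g"
  by (simp add: bddae_def)

lemma fin_comb_insert:
  "finite F \<Longrightarrow> k \<notin> F \<Longrightarrow> fin_comb f (insert k F) \<beta> x = \<beta> k * f k x + fin_comb f F \<beta> x"
  by (simp add: fin_comb_def)

lemma fin_comb_insert':
  "finite F \<Longrightarrow> k \<notin> F \<Longrightarrow> fin_comb f (insert k F) \<beta> = (\<lambda>x. \<beta> k * f k x + fin_comb f F \<beta> x)"
  by (simp add: fin_comb_def fun_eq_iff)

lemma key:
  fixes f :: "nat \<Rightarrow> real^'n \<Rightarrow> complex" and M :: "(real^'n) measure"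
  assumes "finite F"
  shows "\<exists>C\<ge>0. closed {\<beta>::nat\<Rightarrow>complex. bddae M (fin_comb f F \<beta>)} \<and>
     (\<forall>\<beta>. bddae M (fin_comb f F \<beta>) \<longrightarrow>
        (AE x in M. cmod (fin_comb f F \<beta> x) \<le> C * (\<Sum>n\<in>F. cmod (\<beta> n))))"
  using assms
proof (induction F rule: finite_induct)
  case empty
  show ?case by (rule exI[of _ 0]) (simp add: fin_comb_def bddae_def)
next
  case (insert k F)
  obtain C where C0: "C \<ge> 0" and Ccl: "closed {\<beta>::nat\<Rightarrow>complex. bddae M (fin_comb f F \<beta>)}"
    and Cb: "\<And>\<beta>. bddae M (fin_comb f F \<beta>) \<Longrightarrow>
        (AE x in M. cmod (fin_comb f F \<beta> x) \<le> C * (\<Sum>n\<in>F. cmod (\<beta> n)))"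
    using insert.IH by blast
  show ?case
  proof (cases "\<exists>\<gamma>. bddae M (\<lambda>x. f k x + fin_comb f F \<gamma> x)")
    case True
    then obtain \<gamma> where g: "bddae M (\<lambda>x. f k x + fin_comb f F \<gamma> x)" by blast
    define u where "u = (\<lambda>x. f k x + fin_comb f F \<gamma> x)"
    obtain Mu where Mu: "AE x in M. cmod (u x) \<le> Mu" using g unfolding bddae_def u_def by blast
    define Mu' where "Mu' = max Mu 0"
    define \<Gamma> where "\<Gamma> = (\<Sum>n\<in>F. cmod (\<gamma> n))"
    have \<Gamma>0: "\<Gamma> \<ge> 0" unfolding \<Gamma>_def by (simp add: sum_nonneg)
    define L where "L = (\<lambda>(\<beta>::nat\<Rightarrow>complex) j. \<beta> j - \<beta> k * \<gamma> j)"
    have eq: "fin_comb f (insert k F) \<beta> x = \<beta> k * u x + fin_comb f F (L \<beta>) x" for \<beta> x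
      using insert.hyps
      by (simp add: fin_comb_def u_def L_def algebra_simps sum_subtractf sum_distrib_left)
    have setq: "{\<beta>. bddae M (fin_comb f (insert k F) \<beta>)} = L -` {\<beta>. bddae M (fin_comb f F \<beta>)}"
    proof (intro set_eqI iffI; simp)
      fix \<beta> assume b: "bddae M (fin_comb f (insert k F) \<beta>)"
      have "bddae M (\<lambda>x. fin_comb f (insert k F) \<beta> x + (- \<beta> k) * u x)"
        by (intro bddae_add bddae_scale b) (simp add: g u_def)
      then show "bddae M (fin_comb f F (L \<beta>))"
        by (subst (asm) bddae_cong[where g="fin_comb f F (L \<beta>)"]) (simp_all add: eq)
    next
      fix \<beta> assume b: "bddae M (fin_comb f F (L \<beta>))"
      have "bddae M (\<lambda>x. \<beta> k * u x + fin_comb f F (L \<beta>) x)"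
        by (intro bddae_add bddae_scale b) (simp add: g u_def)
      then show "bddae M (fin_comb f (insert k F) \<beta>)"
        by (simp add: eq[abs_def])
    qed
    have contL: "continuous (at \<beta>) L" for \<beta>
    proof -
      have "continuous_on UNIV L" unfolding L_def
        by (intro continuous_on_coordinatewise_then_product continuous_intros continuous_on_product_coordinates)
      then show ?thesis by (simp add: continuous_on_eq_continuous_at)
    qed
    have cl: "closed {\<beta>::nat\<Rightarrow>complex. bddae M (fin_comb f (insert k F) \<beta>)}"
      unfolding setq by (rule continuous_closed_vimage[OF Ccl contL])
    show ?thesis
    proof (intro exI[of _ "Mu' + C + C * \<Gamma>"] conjI allI impI cl)
      show "0 \<le> Mu' + C + C * \<Gamma>" using C0 \<Gamma>0 by (simp add: Mu'_def)
      fix \<beta> assume b: "bddae M (fin_comb f (insert k F) \<beta>)"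
      then have "L \<beta> \<in> {\<beta>. bddae M (fin_comb f F \<beta>)}" using setq by blast
      then have r: "AE x in M. cmod (fin_comb f F (L \<beta>) x) \<le> C * (\<Sum>n\<in>F. cmod (L \<beta> n))"
        using Cb by blast
      have sL: "(\<Sum>n\<in>F. cmod (L \<beta> n)) \<le> (\<Sum>n\<in>F. cmod (\<beta> n)) + cmod (\<beta> k) * \<Gamma>"
      proof -
        have "(\<Sum>n\<in>F. cmod (L \<beta> n)) \<le> (\<Sum>n\<in>F. cmod (\<beta> n) + cmod (\<beta> k) * cmod (\<gamma> n))"
          unfolding L_def by (intro sum_mono) (metis norm_mult norm_triangle_ineq4)
        then show ?thesis by (simp add: sum.distrib \<Gamma>_def sum_distrib_left)
      qed
      define S where "S = (\<Sum>n\<in>F. cmod (\<beta> n))"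
      have S0: "S \<ge> 0" unfolding S_def by (simp add: sum_nonneg)
      have tot: "(\<Sum>n\<in>insert k F. cmod (\<beta> n)) = cmod (\<beta> k) + S"
        using insert.hyps by (simp add: S_def)
      show "AE x in M. cmod (fin_comb f (insert k F) \<beta> x) \<le> (Mu' + C + C * \<Gamma>) * (\<Sum>n\<in>insert k F. cmod (\<beta> n))"
        using r Mu
      proof eventually_elim
        case (elim x)
        have "cmod (fin_comb f (insert k F) \<beta> x) \<le> cmod (\<beta> k) * cmod (u x) + cmod (fin_comb f F (L \<beta>) x)"
          by (simp add: eq norm_mult[symmetric]) (rule norm_triangle_ineq)
        also have "\<dots> \<le> cmod (\<beta> k) * Mu' + C * (S + cmod (\<beta> k) * \<Gamma>)"
        proof (rule add_mono)
          show "cmod (\<beta> k) * cmod (u x) \<le> cmod (\<beta> k) * Mu'"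
            using elim(2) by (intro mult_left_mono) (auto simp: Mu'_def)
          show "cmod (fin_comb f F (L \<beta>) x) \<le> C * (S + cmod (\<beta> k) * \<Gamma>)"
            using elim(1) sL C0 unfolding S_def by (meson mult_left_mono order_trans)
        qed
        also have "\<dots> \<le> (Mu' + C + C * \<Gamma>) * (cmod (\<beta> k) + S)"
          using C0 \<Gamma>0 S0 by (simp add: algebra_simps Mu'_def mult_nonneg_nonneg)
        finally show ?case using tot by simp
      qed
    qed
  next
    case False
    have setq: "{\<beta>. bddae M (fin_comb f (insert k F) \<beta>)} =
         (\<lambda>\<beta>. \<beta> k) -` {0} \<inter> {\<beta>. bddae M (fin_comb f F \<beta>)}"
    proof (intro set_eqI iffI; simp)
      fix \<beta> assume b: "bddae M (fin_comb f (insert k F) \<beta>)"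
      show "\<beta> k = 0 \<and> bddae M (fin_comb f F \<beta>)"
      proof (cases "\<beta> k = 0")
        case True then show ?thesis using b insert.hyps by (simp add: fin_comb_insert')
      next
        case nz: False
        have "bddae M (\<lambda>x. (1 / \<beta> k) * fin_comb f (insert k F) \<beta> x)" by (rule bddae_scale[OF b])
        moreover have "(1 / \<beta> k) * fin_comb f (insert k F) \<beta> x = f k x + fin_comb f F (\<lambda>j. \<beta> j / \<beta> k) x" for x
          using insert.hyps nz by (simp add: fin_comb_def field_simps sum_distrib_left sum_divide_distrib)
        ultimately have "bddae M (\<lambda>x. f k x + fin_comb f F (\<lambda>j. \<beta> j / \<beta> k) x)" by simp
        then show ?thesis using False by blast
      qed
    next
      fix \<beta> assume "\<beta> k = 0 \<and> bddae M (fin_comb f F \<beta>)"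
      then show "bddae M (fin_comb f (insert k F) \<beta>)" using insert.hyps by (simp add: fin_comb_insert')
    qed
    have cl: "closed {\<beta>::nat\<Rightarrow>complex. bddae M (fin_comb f (insert k F) \<beta>)}"
      unfolding setq
    proof (intro closed_Int Ccl continuous_closed_vimage)
      show "continuous (at x) (\<lambda>\<beta>::nat\<Rightarrow>complex. \<beta> k)" for x
        using continuous_on_product_coordinates[of k] continuous_on_eq_continuous_at[OF open_UNIV]
        by blast
    qed simp
    show ?thesis
    proof (intro exI[of _ C] conjI allI impI cl C0)
      fix \<beta> assume b: "bddae M (fin_comb f (insert k F) \<beta>)"
      then have bk: "\<beta> k = 0" and bF: "bddae M (fin_comb f F \<beta>)" using setq by auto
      show "AE x in M. cmod (fin_comb f (insert k F) \<beta> x) \<le> C * (\<Sum>n\<in>insert k F. cmod (\<beta> n))"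
        using Cb[OF bF] insert.hyps bk by (simp add: fin_comb_insert)
    qed
  qed
qed

lemma fin_comb_meas:
  assumes "\<And>n. f n \<in> borel_measurable M"
  shows "fin_comb f F \<beta> \<in> borel_measurable M"
  unfolding fin_comb_def using assms by measurable

lemma Phi_comb:
  fixes f :: "nat \<Rightarrow> real^'n \<Rightarrow> complex" and M :: "(real^'n) measure"
  assumes F: "finite F" and fm: "\<And>n. f n \<in> borel_measurable M" and nz: "emeasure M (space M) \<noteq> 0"
  shows "\<exists>C\<ge>0. (\<forall>\<beta>. Phi M (fin_comb f F \<beta>) \<le> C * (\<Sum>n\<in>F. cmod (\<beta> n))) \<and>
          (\<lambda>\<beta>. Phi M (fin_comb f F \<beta>)) \<in> borel_measurable borel"
proof -
  obtain C where C0: "C \<ge> 0" and Vcl: "closed {\<beta>::nat\<Rightarrow>complex. bddae M (fin_comb f F \<beta>)}"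
    and Cb: "\<And>\<beta>. bddae M (fin_comb f F \<beta>) \<Longrightarrow>
        (AE x in M. cmod (fin_comb f F \<beta> x) \<le> C * (\<Sum>n\<in>F. cmod (\<beta> n)))"
    using key[OF F, of M f] by blast
  define V where "V = {\<beta>::nat\<Rightarrow>complex. bddae M (fin_comb f F \<beta>)}"
  define P where "P = (\<lambda>\<beta>. Phi M (fin_comb f F \<beta>))"
  have P0: "P \<beta> \<ge> 0" for \<beta> unfolding P_def by (rule Phi_nonneg[OF nz])
  have bound: "P \<beta> \<le> C * (\<Sum>n\<in>F. cmod (\<beta> n))" for \<beta>
    unfolding P_def
    by (intro Phi_le fin_comb_meas fm Cb) (use C0 in \<open>auto intro!: sum_nonneg mult_nonneg_nonneg\<close>)
  have diff: "fin_comb f F (\<lambda>n. a n - b n) x = fin_comb f F a x + (-1) * fin_comb f F b x" for a b x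
    by (simp add: fin_comb_def algebra_simps sum_subtractf)
  have lip: "P a \<le> P b + C * (\<Sum>n\<in>F. cmod (a n - b n))" if "a \<in> V" "b \<in> V" for a b
    unfolding P_def
  proof (intro Phi_le fin_comb_meas fm)
    show "0 \<le> Phi M (fin_comb f F b) + C * (\<Sum>n\<in>F. cmod (a n - b n))"
      using P0[of b] C0 by (simp add: P_def sum_nonneg)
    have bd: "bddae M (fin_comb f F (\<lambda>n. a n - b n))"
      using that unfolding V_def by (subst bddae_cong[OF diff]) (intro bddae_add bddae_scale; simp)
    show "AE x in M. cmod (fin_comb f F a x) \<le> Phi M (fin_comb f F b) + C * (\<Sum>n\<in>F. cmod (a n - b n))"
      using Cb[OF bd] Phi_AE[OF fin_comb_meas[OF fm] that(2)[unfolded V_def, simplified]]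
    proof eventually_elim
      case (elim x)
      have "cmod (fin_comb f F a x) \<le> cmod (fin_comb f F b x) + cmod (fin_comb f F (\<lambda>n. a n - b n) x)"
        using diff[of a b x] norm_triangle_ineq4[of "fin_comb f F a x" "fin_comb f F b x"]
        by (simp add: norm_minus_commute) (metis add.commute diff_add_cancel norm_triangle_ineq)
      then show ?case using elim by linarith
    qed
  qed
  have cont: "continuous_on V P"
    unfolding continuous_on_def
  proof (intro ballI)
    fix x assume x: "x \<in> V"
    define d where "d = (\<lambda>a. C * (\<Sum>n\<in>F. cmod (a n - x n)))"
    have "continuous_on V d" unfolding d_def
      by (intro continuous_intros continuous_on_subset[OF continuous_on_product_coordinates]) auto
    then have "(d \<longlongrightarrow> d x) (at x within V)" using x by (simp add: continuous_on_def)
    then have d0: "(d \<longlongrightarrow> 0) (at x within V)" by (simp add: d_def)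
    have "eventually (\<lambda>a. norm (P a - P x) \<le> d a) (at x within V)"
    proof -
      have "eventually (\<lambda>a. a \<in> V) (at x within V)" by (simp add: eventually_at_filter)
      then show ?thesis
      proof eventually_elim
        case (elim a)
        have "(\<Sum>n\<in>F. cmod (x n - a n)) = (\<Sum>n\<in>F. cmod (a n - x n))"
          by (simp add: norm_minus_commute)
        then show ?case using lip[OF elim x] lip[OF x elim] by (simp add: d_def abs_le_iff)
      qed
    qed
    from Lim_null_comparison[OF this d0] show "(P \<longlongrightarrow> P x) (at x within V)"
      by (simp add: LIM_zero_iff)
  qed
  have "(\<lambda>\<beta>. indicator V \<beta> *\<^sub>R P \<beta>) \<in> borel_measurable borel"
    by (rule borel_measurable_continuous_on_indicator[OF _ cont]) (use Vcl V_def in auto)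
  moreover have "indicator V \<beta> *\<^sub>R P \<beta> = P \<beta>" for \<beta>
  proof (cases "\<beta> \<in> V")
    case False
    then have "P \<beta> \<le> 0" unfolding P_def V_def by (intro Phi_unbdd fin_comb_meas fm) auto
    then show ?thesis using P0[of \<beta>] False by simp
  qed simp
  ultimately have "P \<in> borel_measurable borel" by (metis (no_types, lifting) ext)
  then show ?thesis using C0 bound unfolding P_def by blast
qed

lemma L2_comb:
  fixes h :: "nat \<Rightarrow> real^'n \<Rightarrow> complex"
  assumes basis: "hermite_basis h lam" and F: "finite F"
  shows "L2_norm (fin_comb h F a) = sqrt (\<Sum>n\<in>F. (cmod (a n))\<^sup>2)"
proof -
  have hm[measurable]: "h n \<in> borel_measurable lborel" for n
    using basis by (simp add: hermite_basis_def L2_fun_def)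
  have [measurable]: "(\<lambda>x. cnj (h m x)) \<in> borel_measurable lborel" for m
    by (rule borel_measurable_continuous_on[OF continuous_on_cnj[OF continuous_on_id] hm])
  have hi: "integrable lborel (\<lambda>x. (cmod (h n x))\<^sup>2)" for n
    using basis by (simp add: hermite_basis_def L2_fun_def)
  have ip: "integrable lborel (\<lambda>x. h n x * cnj (h m x))" for n m
  proof (rule Bochner_Integration.integrable_bound[where f="\<lambda>x. (cmod (h n x))\<^sup>2 + (cmod (h m x))\<^sup>2"])
    show "integrable lborel (\<lambda>x. (cmod (h n x))\<^sup>2 + (cmod (h m x))\<^sup>2)"
      by (intro Bochner_Integration.integrable_add hi)
    show "(\<lambda>x. h n x * cnj (h m x)) \<in> borel_measurable lborel" by measurable
    show "AE x in lborel. norm (h n x * cnj (h m x)) \<le> norm ((cmod (h n x))\<^sup>2 + (cmod (h m x))\<^sup>2)"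
    proof (intro AE_I2)
      fix x
      have "2 * (cmod (h n x) * cmod (h m x)) \<le> (cmod (h n x))\<^sup>2 + (cmod (h m x))\<^sup>2"
        using sum_squares_bound[of "cmod (h n x)" "cmod (h m x)"] by simp
      moreover have "0 \<le> cmod (h n x) * cmod (h m x)" by simp
      ultimately have "cmod (h n x) * cmod (h m x) \<le> (cmod (h n x))\<^sup>2 + (cmod (h m x))\<^sup>2"
        by linarith
      then show "norm (h n x * cnj (h m x)) \<le> norm ((cmod (h n x))\<^sup>2 + (cmod (h m x))\<^sup>2)"
        by (simp add: norm_mult)
    qed
  qed
  have inner: "L2_inner (h n) (h m) = (if n = m then 1 else 0)" for n m
    using basis by (simp add: hermite_basis_def)
  have pw: "complex_of_real ((cmod (fin_comb h F a x))\<^sup>2) =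
      (\<Sum>n\<in>F. \<Sum>m\<in>F. a n * cnj (a m) * (h n x * cnj (h m x)))" for x
    unfolding complex_norm_square fin_comb_def cnj_sum sum_product
    by (intro sum.cong refl) (simp add: algebra_simps)
  have "complex_of_real (LINT x|lborel. (cmod (fin_comb h F a x))\<^sup>2) =
        (LINT x|lborel. (\<Sum>n\<in>F. \<Sum>m\<in>F. a n * cnj (a m) * (h n x * cnj (h m x))))"
    by (simp only: integral_complex_of_real[symmetric] pw)
  also have "\<dots> = (\<Sum>n\<in>F. \<Sum>m\<in>F. a n * cnj (a m) * L2_inner (h n) (h m))"
  proof -
    have i1: "integrable lborel (\<lambda>x. a n * cnj (a m) * (h n x * cnj (h m x)))" for n m
      by (rule Bochner_Integration.integrable_mult_right[OF ip])
    have "(LINT x|lborel. (\<Sum>n\<in>F. \<Sum>m\<in>F. a n * cnj (a m) * (h n x * cnj (h m x))))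
       = (\<Sum>n\<in>F. LINT x|lborel. (\<Sum>m\<in>F. a n * cnj (a m) * (h n x * cnj (h m x))))"
      by (rule Bochner_Integration.integral_sum) (rule Bochner_Integration.integrable_sum[OF i1])
    also have "\<dots> = (\<Sum>n\<in>F. \<Sum>m\<in>F. LINT x|lborel. a n * cnj (a m) * (h n x * cnj (h m x)))"
      by (rule sum.cong[OF refl], rule Bochner_Integration.integral_sum[OF i1])
    also have "\<dots> = (\<Sum>n\<in>F. \<Sum>m\<in>F. a n * cnj (a m) * L2_inner (h n) (h m))"
      unfolding L2_inner_def by (rule sum.cong[OF refl], rule sum.cong[OF refl], rule integral_mult_right_zero)
    finally show ?thesis .
  qed
  also have "\<dots> = (\<Sum>n\<in>F. a n * cnj (a n))"
    using F by (simp add: inner if_distrib cong: if_cong)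
  also have "\<dots> = complex_of_real (\<Sum>n\<in>F. (cmod (a n))\<^sup>2)"
    by (simp only: of_real_sum complex_norm_square)
  finally show ?thesis unfolding L2_norm_def by (simp only: of_real_eq_iff)
qed

lemma int_bound:
  fixes Wf :: "real \<Rightarrow> real" and p :: nat
  assumes W: "\<And>\<tau>. 0 \<le> Wf \<tau>" "\<And>\<tau>. Wf \<tau> \<le> B" and Bt: "4 * pi * B \<le> t" and t: "t > 0" and p: "p > 0"
  shows "(LINT \<tau>:{-2*pi..2*pi}|lborel. (Wf \<tau>) ^ (2*p)) powr (1 / real (2*p)) \<le> t"
proof -
  define X where "X = (LINT \<tau>:{-2*pi..2*pi}|lborel. (Wf \<tau>) ^ (2*p))"
  have B0: "0 \<le> B" using W(1)[of 0] W(2)[of 0] by linarith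
  have X0: "0 \<le> X" unfolding X_def set_lebesgue_integral_def
    by (intro integral_nonneg_AE AE_I2) (simp add: W(1))
  have meas: "measure lborel {-2*pi..2*pi} = 4 * pi" by simp
  have XB: "X \<le> 4 * pi * B ^ (2*p)"
  proof (cases "set_integrable lborel {-2*pi..2*pi} (\<lambda>\<tau>. (Wf \<tau>) ^ (2*p))")
    case True
    have ci: "set_integrable lborel {-2*pi..2*pi} (\<lambda>\<tau>. B ^ (2*p))"
      unfolding set_integrable_def
      by (intro Bochner_Integration.integrable_scaleR_left integrable_real_indicator) auto
    have "X \<le> (LINT \<tau>:{-2*pi..2*pi}|lborel. B ^ (2*p))"
      unfolding X_def by (rule set_integral_mono[OF True ci]) (intro power_mono W)
    also have "\<dots> = 4 * pi * B ^ (2*p)"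
      by (subst set_integral_const) auto
    finally show ?thesis .
  next
    case False
    then have "X = 0" unfolding X_def set_lebesgue_integral_def set_integrable_def
      by (rule not_integrable_integral_eq)
    then show ?thesis using B0 by simp
  qed
  have "4 * pi * B ^ (2*p) \<le> (4 * pi) ^ (2*p) * B ^ (2*p)"
  proof (rule mult_right_mono)
    have "(4*pi) ^ 1 \<le> (4 * pi) ^ (2*p)"
      by (rule power_increasing) (use p pi_ge_two in auto)
    then show "4 * pi \<le> (4 * pi) ^ (2*p)" by simp
  qed (simp add: B0)
  also have "\<dots> = (4 * pi * B) ^ (2*p)" by (simp add: power_mult_distrib)
  also have "\<dots> \<le> t ^ (2*p)" by (rule power_mono[OF Bt]) (simp add: B0)
  finally have XT: "X \<le> t ^ (2*p)" using XB by linarith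
  have "X powr (1 / real (2*p)) \<le> (t ^ (2*p)) powr (1 / real (2*p))"
    by (rule powr_mono2) (use X0 XT in auto)
  also have "\<dots> = t"
    using t p by (simp add: powr_realpow[symmetric] powr_powr)
  finally show ?thesis unfolding X_def .
qed

theorem mainTheorem18:
  fixes M :: "'w measure" and g :: "nat \<Rightarrow> 'w \<Rightarrow> real"
    and h :: "nat \<Rightarrow> real^'n \<Rightarrow> complex" and lam :: "nat \<Rightarrow> real"
    and c :: "nat \<Rightarrow> complex" and p :: nat and t :: real and N :: nat
  assumes basis: "hermite_basis h lam"
    and P: "prob_space M"
    and g_rv: "\<forall>n. g n \<in> borel_measurable M"
    and g_indep: "prob_space.indep_vars M (\<lambda>_. borel) g UNIV"
    and g_small: "\<forall>n \<rho>. \<rho> > 0 \<longrightarrow> measure M {\<omega> \<in> space M. \<bar>g n \<omega>\<bar> < \<rho>} > 0"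
    and p_odd: "odd p"
    and u0: "in_Hbar lam ((real CARD('n) - 1) / 2) c"
    and t_pos: "t > 0"
    and N_pos: "N \<ge> 1"
  shows "measure M {\<omega> \<in> space M.
           Hbar_norm h lam ((real CARD('n) - 1) / 2) {n. lam n < real N} (\<lambda>n. c n * g n \<omega>) \<le> t \<and>
           (LINT \<tau>:{-2*pi..2*pi}|lborel.
               (Wbar_inf_norm h lam (1/7) {n. lam n < real N}
                  (schr_coeff lam \<tau> (\<lambda>n. c n * g n \<omega>))) ^ (2*p)) powr (1 / real (2*p)) \<le> t} > 0"
proof -
  interpret P: prob_space M by (rule P)
  define s where "s = (real CARD('n) - 1) / 2"
  define F where "F = {n. lam n < real N}"
  define w where "w = (\<lambda>n. ((lam n)\<^sup>2) powr (s / 2))"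
  define w' where "w' = (\<lambda>n. ((lam n)\<^sup>2) powr ((1/7) / 2))"
  have p0: "p > 0" using p_odd by (cases p) auto
  have HB: "Hbar_norm h lam s F a = L2_norm (fin_comb h F (\<lambda>n. complex_of_real (w n) * a n))" for a
    by (simp add: Hbar_norm_def Hpow_comb_def w_def)
  have WB: "Wbar_inf_norm h lam (1/7) F a = Phi lborel (fin_comb h F (\<lambda>n. complex_of_real (w' n) * a n))" for a
    by (simp add: Wbar_inf_norm_def Hpow_comb_def w'_def Linf_norm_def Phi_def)
  have hm: "h n \<in> borel_measurable lborel" for n
    using basis by (simp add: hermite_basis_def L2_fun_def)
  have nz: "emeasure lborel (space lborel :: (real^'n) set) \<noteq> 0" by simp
  show ?thesis
  proof (cases "finite F")
    case False
    have fc: "fin_comb h F b = (\<lambda>x. 0)" for b using False by (simp add: fin_comb_def fun_eq_iff)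
    have W0: "Phi lborel (fin_comb h F b) = 0" for b
    proof -
      have "Phi lborel (fin_comb h F b) \<le> 0" unfolding fc by (rule Phi_le) auto
      then show ?thesis using Phi_nonneg[OF nz, of "fin_comb h F b"] by simp
    qed
    have H0: "L2_norm (fin_comb h F b) = 0" for b by (simp add: fc L2_norm_def)
    have "{\<omega> \<in> space M.
           Hbar_norm h lam ((real CARD('n) - 1) / 2) {n. lam n < real N} (\<lambda>n. c n * g n \<omega>) \<le> t \<and>
           (LINT \<tau>:{-2*pi..2*pi}|lborel.
               (Wbar_inf_norm h lam (1/7) {n. lam n < real N}
                  (schr_coeff lam \<tau> (\<lambda>n. c n * g n \<omega>))) ^ (2*p)) powr (1 / real (2*p)) \<le> t} = space M"
      using t_pos p0 by (auto simp: s_def[symmetric] F_def[symmetric] HB WB W0 H0 power_0_left)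
    then show ?thesis by (simp add: P.prob_space)
  next
    case True
    obtain C where C0: "C \<ge> 0" and Cb: "\<And>\<beta>. Phi lborel (fin_comb h F \<beta>) \<le> C * (\<Sum>n\<in>F. cmod (\<beta> n))"
      and Pm: "(\<lambda>\<beta>. Phi lborel (fin_comb h F \<beta>)) \<in> borel_measurable borel"
      using Phi_comb[OF True, of h lborel, OF hm nz] by blast
    define S1 where "S1 = (\<Sum>n\<in>F. w' n * cmod (c n))"
    define S2 where "S2 = (\<Sum>n\<in>F. (w n * cmod (c n))\<^sup>2)"
    have w0: "w n \<ge> 0" "w' n \<ge> 0" for n by (simp_all add: w_def w'_def)
    have S10: "S1 \<ge> 0" unfolding S1_def by (intro sum_nonneg) (simp add: w0)
    have S20: "S2 \<ge> 0" unfolding S2_def by (intro sum_nonneg) simp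
    define K where "K = (sqrt S2 + 1) * (4 * pi * C * S1 + 1)"
    have K1: "K \<ge> sqrt S2 + 1" unfolding K_def
    proof -
      have "(sqrt S2 + 1) * 1 \<le> (sqrt S2 + 1) * (4 * pi * C * S1 + 1)"
        by (rule mult_left_mono) (use C0 S10 S20 in \<open>auto intro!: mult_nonneg_nonneg\<close>)
      then show "sqrt S2 + 1 \<le> (sqrt S2 + 1) * (4 * pi * C * S1 + 1)" by simp
    qed
    have K2: "K \<ge> 4 * pi * C * S1 + 1" unfolding K_def
    proof -
      have "1 * (4 * pi * C * S1 + 1) \<le> (sqrt S2 + 1) * (4 * pi * C * S1 + 1)"
        by (rule mult_right_mono) (use C0 S10 S20 in \<open>auto intro!: mult_nonneg_nonneg\<close>)
      then show "4 * pi * C * S1 + 1 \<le> (sqrt S2 + 1) * (4 * pi * C * S1 + 1)" by simp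
    qed
    have Kpos: "K > 0" using K1 S20 by (smt (verit) real_sqrt_ge_zero)
    define \<rho> where "\<rho> = t / K"
    have \<rho>0: "\<rho> > 0" unfolding \<rho>_def using t_pos Kpos by simp
    have \<rho>S2: "\<rho> * sqrt S2 \<le> t"
    proof -
      have "\<rho> * sqrt S2 \<le> \<rho> * K" using K1 \<rho>0 by (intro mult_left_mono) auto
      also have "\<dots> = t" using Kpos by (simp add: \<rho>_def)
      finally show ?thesis .
    qed
    have \<rho>S1: "4 * pi * (C * \<rho> * S1) \<le> t"
    proof -
      have "4 * pi * (C * \<rho> * S1) = \<rho> * (4 * pi * C * S1)" by (simp add: algebra_simps)
      also have "\<dots> \<le> \<rho> * K" using K2 \<rho>0 by (intro mult_left_mono) auto
      also have "\<dots> = t" using Kpos by (simp add: \<rho>_def)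
      finally show ?thesis .
    qed
    define A where "A = {\<omega> \<in> space M. \<forall>n\<in>F. \<bar>g n \<omega>\<bar> < \<rho>}"
    define E where "E = {\<omega> \<in> space M.
           Hbar_norm h lam ((real CARD('n) - 1) / 2) {n. lam n < real N} (\<lambda>n. c n * g n \<omega>) \<le> t \<and>
           (LINT \<tau>:{-2*pi..2*pi}|lborel.
               (Wbar_inf_norm h lam (1/7) {n. lam n < real N}
                  (schr_coeff lam \<tau> (\<lambda>n. c n * g n \<omega>))) ^ (2*p)) powr (1 / real (2*p)) \<le> t}"
    have E': "E = {\<omega> \<in> space M.
           L2_norm (fin_comb h F (\<lambda>n. complex_of_real (w n) * (c n * g n \<omega>))) \<le> t \<and>
           (LINT \<tau>:{-2*pi..2*pi}|lborel.
               (Phi lborel (fin_comb h F (\<lambda>n. complex_of_real (w' n) * schr_coeff lam \<tau> (\<lambda>n. c n * g n \<omega>) n))) ^ (2*p)) powr (1 / real (2*p)) \<le> t}"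
      unfolding E_def s_def[symmetric] F_def[symmetric] HB WB ..
    have AE: "A \<subseteq> E"
    proof
      fix \<omega> assume "\<omega> \<in> A"
      then have \<omega>: "\<omega> \<in> space M" and gb: "\<And>n. n \<in> F \<Longrightarrow> \<bar>g n \<omega>\<bar> < \<rho>" by (auto simp: A_def)
      have "L2_norm (fin_comb h F (\<lambda>n. complex_of_real (w n) * (c n * g n \<omega>)))
          = sqrt (\<Sum>n\<in>F. (cmod (complex_of_real (w n) * (c n * g n \<omega>)))\<^sup>2)"
        by (rule L2_comb[OF basis True])
      also have "\<dots> \<le> sqrt (\<Sum>n\<in>F. \<rho>\<^sup>2 * (w n * cmod (c n))\<^sup>2)"
      proof (intro real_sqrt_le_mono sum_mono)
        fix n assume n: "n \<in> F"
        have "cmod (complex_of_real (w n) * (c n * g n \<omega>)) = (w n * cmod (c n)) * \<bar>g n \<omega>\<bar>"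
          using w0 by (simp add: norm_mult)
        also have "\<dots> \<le> (w n * cmod (c n)) * \<rho>"
          using gb[OF n] w0 by (intro mult_left_mono) auto
        finally have "cmod (complex_of_real (w n) * (c n * g n \<omega>)) \<le> (w n * cmod (c n)) * \<rho>" .
        then have "(cmod (complex_of_real (w n) * (c n * g n \<omega>)))\<^sup>2 \<le> ((w n * cmod (c n)) * \<rho>)\<^sup>2"
          by (intro power_mono) auto
        then show "(cmod (complex_of_real (w n) * (c n * g n \<omega>)))\<^sup>2 \<le> \<rho>\<^sup>2 * (w n * cmod (c n))\<^sup>2"
          by (simp add: power_mult_distrib mult.commute)
      qed
      also have "\<dots> = \<rho> * sqrt S2"
        using \<rho>0 by (simp add: S2_def sum_distrib_left[symmetric] real_sqrt_mult)
      also have "\<dots> \<le> t" by (rule \<rho>S2)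
      finally have H: "L2_norm (fin_comb h F (\<lambda>n. complex_of_real (w n) * (c n * g n \<omega>))) \<le> t" .
      have Wb: "Phi lborel (fin_comb h F (\<lambda>n. complex_of_real (w' n) * schr_coeff lam \<tau> (\<lambda>n. c n * g n \<omega>) n)) \<le> C * \<rho> * S1" for \<tau>
      proof -
        have "Phi lborel (fin_comb h F (\<lambda>n. complex_of_real (w' n) * schr_coeff lam \<tau> (\<lambda>n. c n * g n \<omega>) n))
           \<le> C * (\<Sum>n\<in>F. cmod (complex_of_real (w' n) * schr_coeff lam \<tau> (\<lambda>n. c n * g n \<omega>) n))"
          by (rule Cb)
        also have "\<dots> \<le> C * (\<Sum>n\<in>F. \<rho> * (w' n * cmod (c n)))"
        proof (intro mult_left_mono C0 sum_mono)
          fix n assume n: "n \<in> F"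
          have ex: "cmod (exp (- \<i> * complex_of_real (\<tau> * (lam n)\<^sup>2))) = 1"
            using norm_exp_i_times[of "- (\<tau> * (lam n)\<^sup>2)"] by simp
          have "cmod (complex_of_real (w' n) * schr_coeff lam \<tau> (\<lambda>n. c n * g n \<omega>) n) = (w' n * cmod (c n)) * \<bar>g n \<omega>\<bar>"
            using w0 by (simp add: schr_coeff_def norm_mult ex)
          also have "\<dots> \<le> (w' n * cmod (c n)) * \<rho>"
            using gb[OF n] w0 by (intro mult_left_mono) auto
          finally show "cmod (complex_of_real (w' n) * schr_coeff lam \<tau> (\<lambda>n. c n * g n \<omega>) n) \<le> \<rho> * (w' n * cmod (c n))"
            by (simp add: mult.commute)
        qed
        also have "\<dots> = C * \<rho> * S1" by (simp add: S1_def sum_distrib_left mult.assoc)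
        finally show ?thesis .
      qed
      have I: "(LINT \<tau>:{-2*pi..2*pi}|lborel.
               (Phi lborel (fin_comb h F (\<lambda>n. complex_of_real (w' n) * schr_coeff lam \<tau> (\<lambda>n. c n * g n \<omega>) n))) ^ (2*p)) powr (1 / real (2*p)) \<le> t"
        by (rule int_bound[OF Phi_nonneg[OF nz] Wb \<rho>S1 t_pos p0])
      show "\<omega> \<in> E" unfolding E' using \<omega> H I by simp
    qed
    have gm[measurable]: "g n \<in> borel_measurable M" for n using g_rv by blast
    have m1: "(\<lambda>\<omega>. L2_norm (fin_comb h F (\<lambda>n. complex_of_real (w n) * (c n * g n \<omega>)))) \<in> borel_measurable M"
      unfolding L2_comb[OF basis True] by measurable
    define Bt where "Bt = (\<lambda>x::'w \<times> real. (\<lambda>n. complex_of_real (w' n) * schr_coeff lam (snd x) (\<lambda>n. c n * g n (fst x)) n))"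
    have Btm: "Bt \<in> borel_measurable (M \<Otimes>\<^sub>M lborel)"
      unfolding Bt_def schr_coeff_def
      by (rule measurable_coordinatewise_then_product) measurable
    have PBm: "(\<lambda>x. Phi lborel (fin_comb h F (Bt x))) \<in> borel_measurable (M \<Otimes>\<^sub>M lborel)"
      using measurable_comp[OF Btm Pm] by (simp add: comp_def)
    have f2m: "(\<lambda>(\<omega>, \<tau>). indicator {-2*pi..2*pi} \<tau> *\<^sub>R (Phi lborel (fin_comb h F (Bt (\<omega>, \<tau>)))) ^ (2*p)) \<in> borel_measurable (M \<Otimes>\<^sub>M lborel)"
    proof -
      have "(\<lambda>x. indicator {-2*pi..2*pi} (snd x) *\<^sub>R (Phi lborel (fin_comb h F (Bt x))) ^ (2*p)) \<in> borel_measurable (M \<Otimes>\<^sub>M lborel)"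
        using PBm by measurable
      then show ?thesis by (simp add: case_prod_beta')
    qed
    have m2': "(\<lambda>\<omega>. LINT \<tau>|lborel. indicator {-2*pi..2*pi} \<tau> *\<^sub>R (Phi lborel (fin_comb h F (Bt (\<omega>, \<tau>)))) ^ (2*p)) \<in> borel_measurable M"
      by (rule lborel.borel_measurable_lebesgue_integral[OF f2m])
    have m2: "(\<lambda>\<omega>. (LINT \<tau>:{-2*pi..2*pi}|lborel.
               (Phi lborel (fin_comb h F (\<lambda>n. complex_of_real (w' n) * schr_coeff lam \<tau> (\<lambda>n. c n * g n \<omega>) n))) ^ (2*p)) powr (1 / real (2*p))) \<in> borel_measurable M"
      using m2' unfolding set_lebesgue_integral_def Bt_def by simp
    have Em: "E \<in> P.events"
      unfolding E' using m1 m2 by measurable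
    have Apos: "P.prob A > 0"
    proof (cases "F = {}")
      case True
      then have "A = space M" by (simp add: A_def)
      then show ?thesis by (simp add: P.prob_space)
    next
      case Fne: False
      define Ev where "Ev = (\<lambda>n. g n -` {x. \<bar>x\<bar> < \<rho>} \<inter> space M)"
      have ind: "P.indep_sets (\<lambda>i. {g i -` X \<inter> space M | X. X \<in> sets borel}) UNIV"
        using g_indep unfolding P.indep_vars_def2 by blast
      have "P.prob (\<Inter>j\<in>F. Ev j) = (\<Prod>j\<in>F. P.prob (Ev j))"
      proof (rule P.indep_setsD[OF ind _ Fne True])
        show "\<forall>j\<in>F. Ev j \<in> {g j -` X \<inter> space M | X. X \<in> sets borel}"
          unfolding Ev_def by (auto intro!: exI[of _ "{x. \<bar>x\<bar> < \<rho>}"])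
      qed simp
      moreover have "(\<Inter>j\<in>F. Ev j) = A" using Fne by (auto simp: A_def Ev_def)
      moreover have "P.prob (Ev j) > 0" for j
      proof -
        have "Ev j = {\<omega> \<in> space M. \<bar>g j \<omega>\<bar> < \<rho>}" by (auto simp: Ev_def)
        then show ?thesis using g_small \<rho>0 by simp
      qed
      ultimately show ?thesis by (simp add: prod_pos)
    qed
    have "P.prob A \<le> P.prob E" by (rule P.finite_measure_mono[OF AE Em])
    then show ?thesis using Apos unfolding E_def by simp
  qed
qed

end
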